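(* Let $A\in\mathbb Z_{\ge0}^{m\times m}$, $B\in\mathbb Z_{\ge0}^{n\times n}$, $C\in\mathbb Z_{\ge0}^{p\times p}$ and nonnegative integer matrices $R_1,S_1,R_2,S_2,R_3,S_3$ of compatible sizes with $A=R_1S_1$, $B=S_1R_1$, $B=R_2S_2$, $C=S_2R_2$, $A=R_3S_3$, $C=S_3R_3$, satisfying the triangle equations $R_1R_2=R_3$, $R_2S_3=S_1$, $S_3R_1=S_2$. Then the restricted matrices also form such a triangle: with $A'=A_{J_A\times J_A}$, $B'=B_{J_B\times J_B}$, $C'=C_{J_C\times J_C}$, $R_1'=(R_1)_{J_A\times J_B}$, $S_1'=(S_1)_{J_B\times J_A}$, $R_2'=(R_2)_{J_B\times J_C}$, $S_2'=(S_2)_{J_C\times J_B}$, $R_3'=(R_3)_{J_A\times J_C}$, $S_3'=(S_3)_{J_C\times J_A}$ we have $A'=R_1'S_1'$, $B'=S_1'R_1'$, $B'=R_2'S_2'$, $C'=S_2'R_2'$, $A'=R_3'S_3'$, $C'=S_3'R_3'$ and $R_1'R_2'=R_3'$, $R_2'S_3'=S_1'$, $S_3'R_1'=S_2'$.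
   Context: For a matrix $M$ and index sets $K,L$, $M_{K\times L}$ is the submatrix with rows in $K$ and columns in $L$. For a square matrix $A\in\mathbb Z_{\ge0}^{m\times m}$, $J_A\subseteq\{1,\dots,m\}$ is the set of indices $i$ such that for every $k\ge1$ the $i$-th row and the $i$-th column of $A^k$ are nonzero (the indices occurring in bi-infinite paths of the graph with adjacency matrix $A$). *)

theory Defs
  imports "Jordan_Normal_Form.Matrix" "Jordan_Normal_Form.DL_Submatrix"
begin

definition biinf_indices :: "nat mat \<Rightarrow> nat set" where
  "biinf_indices A = {i. i < dim_row A \<and>
     (\<forall>k::nat. k \<ge> 1 \<longrightarrow>
        (\<exists>j < dim_col A. (A ^\<^sub>m k) $$ (i, j) \<noteq> 0) \<and>
        (\<exists>j < dim_row A. (A ^\<^sub>m k) $$ (j, i) \<noteq> 0))}"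

end

theory Submission
  imports Defs
begin

lemma pick_bij:
  assumes "S = {j. j < b \<and> j \<in> J}"
  shows "bij_betw (pick J) {..<card S} S"
proof -
  have fin: "finite S" using assms by auto
  have inS: "pick J i \<in> S" if "i < card S" for i
    using that assms pick_le[of i b J] pick_in_set[of i S] pick_reduce_set[of i b J]
    by (metis (no_types, lifting) mem_Collect_eq)
  have inj: "inj_on (pick J) {..<card S}"
  proof (rule inj_onI)
    fix x y assume xy: "x \<in> {..<card S}" "y \<in> {..<card S}" "pick J x = pick J y"
    show "x = y"
    proof (rule ccontr)
      assume "x \<noteq> y"
      then consider "x < y" | "y < x" by linarith
      then show False
      proof cases
        case 1 then show ?thesis using xy pick_reduce_set[of _ b J] pick_mono[of y "S" x] assms
          by (metis (no_types, lifting) lessThan_iff less_irrefl)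
      next
        case 2 then show ?thesis using xy pick_reduce_set[of _ b J] pick_mono[of x "S" y] assms
          by (metis (no_types, lifting) lessThan_iff less_irrefl)
      qed
    qed
  qed
  have "pick J ` {..<card S} \<subseteq> S" using inS by auto
  moreover have "card (pick J ` {..<card S}) = card S" using inj card_image by fastforce
  ultimately have "pick J ` {..<card S} = S" using fin card_subset_eq by blast
  then show ?thesis using inj bij_betw_def by blast
qed


lemma submat_mult:
  fixes X Y :: "nat mat"
  assumes X: "X \<in> carrier_mat a b" and Y: "Y \<in> carrier_mat b c"
    and H: "\<And>i k j. i < a \<Longrightarrow> i \<in> I \<Longrightarrow> k < c \<Longrightarrow> k \<in> K \<Longrightarrow> j < b \<Longrightarrow>
              X $$ (i,j) * Y $$ (j,k) \<noteq> 0 \<Longrightarrow> j \<in> J"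
  shows "submatrix (X * Y) I K = submatrix X I J * submatrix Y J K"
proof (rule eq_matI)
  define S where "S = {j. j < b \<and> j \<in> J}"
  have bij: "bij_betw (pick J) {..<card S} S" using pick_bij S_def by blast
  show "dim_row (submatrix (X * Y) I K) = dim_row (submatrix X I J * submatrix Y J K)"
    using X Y by (simp add: dim_submatrix)
  show "dim_col (submatrix (X * Y) I K) = dim_col (submatrix X I J * submatrix Y J K)"
    using X Y by (simp add: dim_submatrix)
  fix i k
  assume i: "i < dim_row (submatrix X I J * submatrix Y J K)"
     and k: "k < dim_col (submatrix X I J * submatrix Y J K)"
  have ic: "i < card {i. i < a \<and> i \<in> I}" using i X by (simp add: dim_submatrix)
  have kc: "k < card {i. i < c \<and> i \<in> K}" using k Y by (simp add: dim_submatrix)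
  define pi where "pi = pick I i"
  define pk where "pk = pick K k"
  have pi: "pi < a" "pi \<in> I" unfolding pi_def using ic pick_le[of i a I] pick_in_set[of i "{i. i < a \<and> i \<in> I}"] pick_reduce_set[of i a I]
    by auto
  have pk: "pk < c" "pk \<in> K" unfolding pk_def using kc pick_le[of k c K] pick_in_set[of k "{i. i < c \<and> i \<in> K}"] pick_reduce_set[of k c K]
    by auto
  have "submatrix (X * Y) I K $$ (i, k) = (X * Y) $$ (pi, pk)"
    unfolding pi_def pk_def using ic kc X Y by (simp add: submatrix_index)
  also have "\<dots> = (\<Sum>j<b. X $$ (pi, j) * Y $$ (j, pk))"
    using pi pk X Y by (simp add: scalar_prod_def atLeast0LessThan)
  also have "\<dots> = (\<Sum>j\<in>S. X $$ (pi, j) * Y $$ (j, pk))"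
    apply (rule sum.mono_neutral_right)
      apply (simp add: S_def)
      apply (auto simp: S_def)[1]
      using H[OF pi(1,2) pk(1,2)] by (auto simp: S_def)
  also have "\<dots> = (\<Sum>l<card S. X $$ (pi, pick J l) * Y $$ (pick J l, pk))"
    using sum.reindex_bij_betw[OF bij, of "\<lambda>j. X $$ (pi, j) * Y $$ (j, pk)"] by simp
  also have "\<dots> = (submatrix X I J * submatrix Y J K) $$ (i, k)"
    using i k ic kc X Y unfolding pi_def pk_def
    by (simp add: dim_submatrix submatrix_index scalar_prod_def atLeast0LessThan S_def)
  finally show "submatrix (X * Y) I K $$ (i, k) = (submatrix X I J * submatrix Y J K) $$ (i, k)" .
qed


lemma pow_intertwine:
  fixes U X V :: "nat mat"
  assumes U: "U \<in> carrier_mat u u" and X: "X \<in> carrier_mat u v" and V: "V \<in> carrier_mat v v"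
    and E: "U * X = X * V"
  shows "U ^\<^sub>m s * X = X * V ^\<^sub>m s"
proof (induction s)
  case 0 then show ?case using U X V by simp
next
  case (Suc s)
  have "U ^\<^sub>m Suc s * X = U ^\<^sub>m s * (U * X)"
    using U X by (simp add: assoc_mult_mat[of _ u u _ u _ v])
  also have "\<dots> = (U ^\<^sub>m s * X) * V" using U X V E by (simp add: assoc_mult_mat[of _ u u _ v _ v])
  also have "\<dots> = X * V ^\<^sub>m Suc s" using Suc U X V by (simp add: assoc_mult_mat[of _ u v _ v _ v])
  finally show ?case .
qed

lemma col_nonzero:
  fixes U X V :: "nat mat"
  assumes U: "U \<in> carrier_mat u u" and X: "X \<in> carrier_mat u v" and V: "V \<in> carrier_mat v v"
    and E: "U * X = X * V" and i: "i \<in> biinf_indices U" and j: "j < v" and x: "X $$ (i,j) \<noteq> 0"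
    and s: "s \<ge> 1"
  shows "\<exists>l < v. (V ^\<^sub>m s) $$ (l, j) \<noteq> 0"
proof -
  obtain j0 where j0: "j0 < u" "(U ^\<^sub>m s) $$ (j0, i) \<noteq> 0"
    using i s U unfolding biinf_indices_def by auto
  have iu: "i < u" using i U unfolding biinf_indices_def by auto
  have "(U ^\<^sub>m s * X) $$ (j0, j) = (\<Sum>l<u. (U ^\<^sub>m s) $$ (j0, l) * X $$ (l, j))"
    using U X j0 j by (simp add: scalar_prod_def atLeast0LessThan)
  moreover have "(U ^\<^sub>m s) $$ (j0, i) * X $$ (i, j) \<noteq> 0" using j0 x by simp
  ultimately have "(U ^\<^sub>m s * X) $$ (j0, j) \<noteq> 0" using iu by (auto simp add: sum_eq_0_iff)
  then have "(X * V ^\<^sub>m s) $$ (j0, j) \<noteq> 0" using pow_intertwine[OF U X V E] by simp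
  moreover have "(X * V ^\<^sub>m s) $$ (j0, j) = (\<Sum>l<v. X $$ (j0, l) * (V ^\<^sub>m s) $$ (l, j))"
    using V X j0 j by (simp add: scalar_prod_def atLeast0LessThan)
  ultimately show ?thesis by (auto simp: sum_eq_0_iff)
qed

lemma row_nonzero:
  fixes V Y W :: "nat mat"
  assumes V: "V \<in> carrier_mat v v" and Y: "Y \<in> carrier_mat v w" and W: "W \<in> carrier_mat w w"
    and E: "V * Y = Y * W" and l: "l \<in> biinf_indices W" and k: "k < v" and y: "Y $$ (k,l) \<noteq> 0"
    and s: "s \<ge> 1"
  shows "\<exists>j < v. (V ^\<^sub>m s) $$ (k, j) \<noteq> 0"
proof -
  obtain j0 where j0: "j0 < w" "(W ^\<^sub>m s) $$ (l, j0) \<noteq> 0"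
    using l s W unfolding biinf_indices_def by auto
  have lw: "l < w" using l W unfolding biinf_indices_def by auto
  have "(Y * W ^\<^sub>m s) $$ (k, j0) = (\<Sum>t<w. Y $$ (k, t) * (W ^\<^sub>m s) $$ (t, j0))"
    using W Y j0 k by (simp add: scalar_prod_def atLeast0LessThan)
  moreover have "Y $$ (k, l) * (W ^\<^sub>m s) $$ (l, j0) \<noteq> 0" using j0 y by simp
  ultimately have "(Y * W ^\<^sub>m s) $$ (k, j0) \<noteq> 0" using lw by (auto simp add: sum_eq_0_iff)
  then have "(V ^\<^sub>m s * Y) $$ (k, j0) \<noteq> 0" using pow_intertwine[OF V Y W E] by simp
  moreover have "(V ^\<^sub>m s * Y) $$ (k, j0) = (\<Sum>t<v. (V ^\<^sub>m s) $$ (k, t) * Y $$ (t, j0))"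
    using V Y j0 k by (simp add: scalar_prod_def atLeast0LessThan)
  ultimately show ?thesis by (auto simp: sum_eq_0_iff)
qed

lemma tri:
  fixes U V W X Y :: "nat mat"
  assumes U: "U \<in> carrier_mat u u" and V: "V \<in> carrier_mat v v" and W: "W \<in> carrier_mat w w"
    and X: "X \<in> carrier_mat u v" and Y: "Y \<in> carrier_mat v w"
    and E1: "U * X = X * V" and E2: "V * Y = Y * W"
  shows "submatrix (X * Y) (biinf_indices U) (biinf_indices W)
       = submatrix X (biinf_indices U) (biinf_indices V) * submatrix Y (biinf_indices V) (biinf_indices W)"
proof (rule submat_mult[OF X Y])
  fix i k j assume i: "i < u" "i \<in> biinf_indices U" and k: "k < w" "k \<in> biinf_indices W"
    and j: "j < v" and nz: "X $$ (i, j) * Y $$ (j, k) \<noteq> 0"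
  have x: "X $$ (i,j) \<noteq> 0" and y: "Y $$ (j,k) \<noteq> 0" using nz by auto
  show "j \<in> biinf_indices V"
    unfolding biinf_indices_def
    using V j col_nonzero[OF U X V E1 i(2) j x] row_nonzero[OF V Y W E2 k(2) j y] by auto
qed

theorem mainTheorem14:
  fixes A B C R1 S1 R2 S2 R3 S3 :: "nat mat" and m n p :: nat
  assumes "A \<in> carrier_mat m m" "B \<in> carrier_mat n n" "C \<in> carrier_mat p p"
    and "R1 \<in> carrier_mat m n" "S1 \<in> carrier_mat n m"
    and "R2 \<in> carrier_mat n p" "S2 \<in> carrier_mat p n"
    and "R3 \<in> carrier_mat m p" "S3 \<in> carrier_mat p m"
    and "A = R1 * S1" "B = S1 * R1"
    and "B = R2 * S2" "C = S2 * R2"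
    and "A = R3 * S3" "C = S3 * R3"
    and "R1 * R2 = R3" "R2 * S3 = S1" "S3 * R1 = S2"
  shows
    "let JA = biinf_indices A; JB = biinf_indices B; JC = biinf_indices C;
         A' = submatrix A JA JA; B' = submatrix B JB JB; C' = submatrix C JC JC;
         R1' = submatrix R1 JA JB; S1' = submatrix S1 JB JA;
         R2' = submatrix R2 JB JC; S2' = submatrix S2 JC JB;
         R3' = submatrix R3 JA JC; S3' = submatrix S3 JC JA
     in A' = R1' * S1' \<and> B' = S1' * R1' \<and>
        B' = R2' * S2' \<and> C' = S2' * R2' \<and>
        A' = R3' * S3' \<and> C' = S3' * R3' \<and>
        R1' * R2' = R3' \<and> R2' * S3' = S1' \<and> S3' * R1' = S2'"
proof -
  note c = assms(1-9)
  have AR1: "A * R1 = R1 * B" using c assms(10,11) by (simp add: assoc_mult_mat[of R1 m n S1 m R1 n])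
  have BS1: "B * S1 = S1 * A" using c assms(10,11) by (simp add: assoc_mult_mat[of S1 n m R1 n S1 m])
  have BR2: "B * R2 = R2 * C" using c assms(12,13) by (simp add: assoc_mult_mat[of R2 n p S2 n R2 p])
  have CS2: "C * S2 = S2 * B" using c assms(12,13) by (simp add: assoc_mult_mat[of S2 p n R2 p S2 n])
  have AR3: "A * R3 = R3 * C" using c assms(14,15) by (simp add: assoc_mult_mat[of R3 m p S3 m R3 p])
  have CS3: "C * S3 = S3 * A" using c assms(14,15) by (simp add: assoc_mult_mat[of S3 p m R3 p S3 m])
  show ?thesis unfolding Let_def
    using tri[OF c(1) c(2) c(1) c(4) c(5) AR1 BS1]
      tri[OF c(2) c(1) c(2) c(5) c(4) BS1 AR1]
      tri[OF c(2) c(3) c(2) c(6) c(7) BR2 CS2]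
      tri[OF c(3) c(2) c(3) c(7) c(6) CS2 BR2]
      tri[OF c(1) c(3) c(1) c(8) c(9) AR3 CS3]
      tri[OF c(3) c(1) c(3) c(9) c(8) CS3 AR3]
      tri[OF c(1) c(2) c(3) c(4) c(6) AR1 BR2]
      tri[OF c(2) c(3) c(1) c(6) c(9) BR2 CS3]
      tri[OF c(3) c(1) c(2) c(9) c(4) CS3 AR1]
      assms(10-18) by simp
qed

end
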